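(* The polynomial $\Delta(\mathbf{x})=\prod_{i<j}(x_i-x_j)$ generates $\DH_n^{\mathrm{sgn}}$ under the action of $\mathbb{C}[F_1^*,\dots,F_{n-1}^*]$, and the polynomial $\Delta(\mathbf{y})=\prod_{i<j}(y_i-y_j)$ generates $\DH_n^{\mathrm{sgn}}$ under the action of $\mathbb{C}[E_1^*,\dots,E_{n-1}^*]$.
   Context: $S_n$ acts on $\mathbb{C}[\mathbf x,\mathbf y]=\mathbb{C}[x_1,\dots,x_n,y_1,\dots,y_n]$ by permuting the $x_i$ and $y_i$ simultaneously; $\mathbb{C}[\mathbf x,\mathbf y]^{S_n}_+$ is the ideal generated by homogeneous symmetric polynomials of positive degree. The space of diagonal harmonics is $\DH_n=\{f\in\mathbb{C}[\mathbf x,\mathbf y]: g(\partial_{\mathbf x},\partial_{\mathbf y})f=0\ \forall g\in\mathbb{C}[\mathbf x,\mathbf y]^{S_n}_+\}$, and $\DH_n^{\mathrm{sgn}}$ is its sign-isotypic component (antisymmetric elements). $F_k^*=\sum_{i=1}^n y_i\partial_{x_i}^k$ and $E_k^*=\sum_{i=1}^n x_i\partial_{y_i}^k$. (Haiman's theorem, used as known: $\Delta(\mathbf x)$ generates $\DH_n$ under $\mathbb{C}[F_1^*,\dots,F_{n-1}^*,\partial_{x_1},\dots,\partial_{x_n}]$, and symmetrically for $\Delta(\mathbf y)$.) *)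

theory Defs
  imports Complex_Main "HOL-Library.Poly_Mapping" "HOL-Combinatorics.Permutations"
begin

text \<open>Variables: Inl i stands for x_i, Inr i stands for y_i (indices i < n).\<close>

type_synonym var = "nat + nat"
type_synonym mono = "var \<Rightarrow>\<^sub>0 nat"
type_synonym cpoly = "mono \<Rightarrow>\<^sub>0 complex"

definition Var :: "var \<Rightarrow> cpoly" where
  "Var v = Poly_Mapping.single (Poly_Mapping.single v 1) 1"

definition const :: "complex \<Rightarrow> cpoly" where
  "const c = Poly_Mapping.single 0 c"

definition X :: "nat \<Rightarrow> cpoly" where "X i = Var (Inl i)"
definition Y :: "nat \<Rightarrow> cpoly" where "Y i = Var (Inr i)"

text \<open>The variable set of C[x_1..x_n,y_1..y_n] (0-based indices).\<close>
definition vars_n :: "nat \<Rightarrow> var set" where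
  "vars_n n = Inl ` {..<n} \<union> Inr ` {..<n}"

definition vars :: "cpoly \<Rightarrow> var set" where
  "vars p = (\<Union>t\<in>Poly_Mapping.keys p. Poly_Mapping.keys (t :: mono))"

definition polys :: "nat \<Rightarrow> cpoly set" where
  "polys n = {p. vars p \<subseteq> vars_n n}"

definition dmono :: "mono \<Rightarrow> cpoly \<Rightarrow> cpoly" where
  "dmono m p = (\<Sum>t\<in>Poly_Mapping.keys p.
      (if (\<forall>v. Poly_Mapping.lookup m v \<le> Poly_Mapping.lookup t v)
       then Poly_Mapping.single (t - m)
              (Poly_Mapping.lookup p t * (\<Prod>v\<in>Poly_Mapping.keys m. of_nat (fact (Poly_Mapping.lookup t v) div fact (Poly_Mapping.lookup t v - Poly_Mapping.lookup m v))))
       else 0))"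

definition pd :: "var \<Rightarrow> cpoly \<Rightarrow> cpoly" where
  "pd v = dmono (Poly_Mapping.single v 1)"

definition diffop :: "cpoly \<Rightarrow> cpoly \<Rightarrow> cpoly" where
  "diffop g f = (\<Sum>m\<in>Poly_Mapping.keys g. const (Poly_Mapping.lookup g m) * dmono m f)"

definition permvar :: "(nat \<Rightarrow> nat) \<Rightarrow> var \<Rightarrow> var" where
  "permvar \<sigma> v = (case v of Inl i \<Rightarrow> Inl (\<sigma> i) | Inr i \<Rightarrow> Inr (\<sigma> i))"

definition permmono :: "(nat \<Rightarrow> nat) \<Rightarrow> mono \<Rightarrow> mono" where
  "permmono \<sigma> t = (\<Sum>v\<in>Poly_Mapping.keys t. Poly_Mapping.single (permvar \<sigma> v) (Poly_Mapping.lookup t v))"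

definition permpoly :: "(nat \<Rightarrow> nat) \<Rightarrow> cpoly \<Rightarrow> cpoly" where
  "permpoly \<sigma> p = (\<Sum>t\<in>Poly_Mapping.keys p. Poly_Mapping.single (permmono \<sigma> t) (Poly_Mapping.lookup p t))"

definition symmetric :: "nat \<Rightarrow> cpoly \<Rightarrow> bool" where
  "symmetric n p \<longleftrightarrow> (\<forall>\<sigma>. \<sigma> permutes {..<n} \<longrightarrow> permpoly \<sigma> p = p)"

definition antisymmetric :: "nat \<Rightarrow> cpoly \<Rightarrow> bool" where
  "antisymmetric n p \<longleftrightarrow>
     (\<forall>\<sigma>. \<sigma> permutes {..<n} \<longrightarrow> permpoly \<sigma> p = const (of_int (sign \<sigma>)) * p)"

definition mdeg :: "mono \<Rightarrow> nat" where
  "mdeg t = (\<Sum>v\<in>Poly_Mapping.keys t. Poly_Mapping.lookup t v)"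

definition homogeneous :: "nat \<Rightarrow> cpoly \<Rightarrow> bool" where
  "homogeneous d p \<longleftrightarrow> (\<forall>t\<in>Poly_Mapping.keys p. mdeg t = d)"

definition sym_gens :: "nat \<Rightarrow> cpoly set" where
  "sym_gens n = {s. s \<in> polys n \<and> symmetric n s \<and> (\<exists>d>0. homogeneous d s)}"

definition sym_ideal :: "nat \<Rightarrow> cpoly set" where
  "sym_ideal n = {p. \<exists>hs :: (cpoly \<times> cpoly) list.
      (\<forall>(h, s)\<in>set hs. h \<in> polys n \<and> s \<in> sym_gens n) \<and> p = (\<Sum>(h, s)\<leftarrow>hs. h * s)}"

definition DH :: "nat \<Rightarrow> cpoly set" where
  "DH n = {f \<in> polys n. \<forall>g\<in>sym_ideal n. diffop g f = 0}"

definition DH_sgn :: "nat \<Rightarrow> cpoly set" where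
  "DH_sgn n = {f \<in> DH n. antisymmetric n f}"

definition Delta_x :: "nat \<Rightarrow> cpoly" where
  "Delta_x n = (\<Prod>(i, j)\<in>{(i, j). i < j \<and> j < n}. X i - X j)"

definition Delta_y :: "nat \<Rightarrow> cpoly" where
  "Delta_y n = (\<Prod>(i, j)\<in>{(i, j). i < j \<and> j < n}. Y i - Y j)"

definition Fstar :: "nat \<Rightarrow> nat \<Rightarrow> cpoly \<Rightarrow> cpoly" where
  "Fstar n k f = (\<Sum>i<n. Y i * dmono (Poly_Mapping.single (Inl i) k) f)"

definition Estar :: "nat \<Rightarrow> nat \<Rightarrow> cpoly \<Rightarrow> cpoly" where
  "Estar n k f = (\<Sum>i<n. X i * dmono (Poly_Mapping.single (Inr i) k) f)"

text \<open>The C[ops]-module generated by p0: smallest C-subspace containing p0 and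
  stable under each operator in ops (for commuting operators this is
  {P(ops) p0 | P polynomial}).\<close>
inductive_set generated :: "(cpoly \<Rightarrow> cpoly) set \<Rightarrow> cpoly \<Rightarrow> cpoly set"
  for ops p0 where
  base: "p0 \<in> generated ops p0"
| add: "p \<in> generated ops p0 \<Longrightarrow> q \<in> generated ops p0 \<Longrightarrow> p + q \<in> generated ops p0"
| smult: "p \<in> generated ops p0 \<Longrightarrow> const c * p \<in> generated ops p0"
| op: "T \<in> ops \<Longrightarrow> p \<in> generated ops p0 \<Longrightarrow> T p \<in> generated ops p0"

end

theory Submission
  imports Defs
begin


lemma lookup_const_mult: "Poly_Mapping.lookup (const c * p) t = c * Poly_Mapping.lookup p t"
proof -
  have "const c * p = Poly_Mapping.map ((*) c) p"
    unfolding const_def by (simp add: mult_map_scale_conv_mult)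
  moreover have "Poly_Mapping.lookup (Poly_Mapping.map ((*) c) p) t = c * Poly_Mapping.lookup p t"
    by transfer (simp add: when_def)
  ultimately show ?thesis by simp
qed

lemma poly_expand: "(p :: 'a \<Rightarrow>\<^sub>0 'b::comm_monoid_add) = (\<Sum>t\<in>Poly_Mapping.keys p. Poly_Mapping.single t (Poly_Mapping.lookup p t))"
proof (rule poly_mapping_eqI)
  fix k
  show "Poly_Mapping.lookup p k = Poly_Mapping.lookup (\<Sum>t\<in>Poly_Mapping.keys p. Poly_Mapping.single t (Poly_Mapping.lookup p t)) k"
    by (simp add: lookup_sum lookup_single when_def in_keys_iff)
qed

lemma mono_induct[case_names zero single add]:
  fixes p :: "'a \<Rightarrow>\<^sub>0 'b::comm_monoid_add"
  assumes "P 0" "\<And>t c. P (Poly_Mapping.single t c)" "\<And>p q. P p \<Longrightarrow> P q \<Longrightarrow> P (p + q)"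
  shows "P p"
proof -
  have "P (\<Sum>t\<in>K. Poly_Mapping.single t (Poly_Mapping.lookup p t))" if "finite K" for K
    using that by (induction K rule: finite_induct) (auto intro: assms)
  then show ?thesis by (subst poly_expand) simp
qed

definition le_m :: "mono \<Rightarrow> mono \<Rightarrow> bool" where
  "le_m m t \<longleftrightarrow> (\<forall>v. Poly_Mapping.lookup m v \<le> Poly_Mapping.lookup t v)"

definition coef :: "mono \<Rightarrow> mono \<Rightarrow> complex" where
  "coef m t = (\<Prod>v\<in>Poly_Mapping.keys m. of_nat (fact (Poly_Mapping.lookup t v) div fact (Poly_Mapping.lookup t v - Poly_Mapping.lookup m v)))"

lemma dmono_K:
  assumes "finite K" "Poly_Mapping.keys p \<subseteq> K"
  shows "dmono m p = (\<Sum>t\<in>K. if le_m m t then Poly_Mapping.single (t - m) (Poly_Mapping.lookup p t * coef m t) else 0)"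
  unfolding dmono_def le_m_def coef_def
  by (rule sum.mono_neutral_left[OF assms]) (auto simp: in_keys_iff)

lemma dmono_single: "dmono m (Poly_Mapping.single t c) = (if le_m m t then Poly_Mapping.single (t - m) (c * coef m t) else 0)"
  by (subst dmono_K[of "{t}"]) auto

lemma dmono_zero[simp]: "dmono m 0 = 0"
  by (simp add: dmono_def)

lemma dmono_add: "dmono m (p + q) = dmono m p + dmono m q"
proof -
  let ?K = "Poly_Mapping.keys p \<union> Poly_Mapping.keys q"
  have k: "Poly_Mapping.keys (p + q) \<subseteq> ?K" by (rule keys_add)
  show ?thesis
    unfolding dmono_K[OF _ k, simplified] dmono_K[of ?K p, simplified] dmono_K[of ?K q, simplified] sum.distrib[symmetric]
    by (rule sum.cong) (auto simp: lookup_add single_add distrib_right)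
qed

lemma const_single: "const c * Poly_Mapping.single t d = Poly_Mapping.single t (c * d)"
  unfolding const_def by (simp add: mult_single)

lemma dmono_const: "dmono m (const c * p) = const c * dmono m p"
proof (induction p rule: mono_induct)
  case (add p q) then show ?case by (simp add: distrib_left dmono_add)
qed (auto simp: dmono_single const_single mult.assoc)

lemma dmono_sum: "dmono m (\<Sum>i\<in>I. f i) = (\<Sum>i\<in>I. dmono m (f i))"
  by (induction I rule: infinite_finite_induct) (auto simp: dmono_add)


section \<open>Permutations\<close>

lemma permvar_comp: "permvar (f \<circ> g) = permvar f \<circ> permvar g"
  by (auto simp: fun_eq_iff permvar_def split: sum.splits)

lemma permvar_id: "permvar id = id"
  by (auto simp: fun_eq_iff permvar_def split: sum.splits)

lemma permvar_inv1: "bij \<sigma> \<Longrightarrow> permvar \<sigma> (permvar (inv \<sigma>) v) = v"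
  by (auto simp: permvar_def bij_is_surj surj_f_inv_f split: sum.splits)

lemma permvar_inv2: "bij \<sigma> \<Longrightarrow> permvar (inv \<sigma>) (permvar \<sigma> v) = v"
  by (auto simp: permvar_def bij_is_inj inv_f_f split: sum.splits)

lemma permvar_eq_iff: "bij \<sigma> \<Longrightarrow> permvar \<sigma> w = v \<longleftrightarrow> w = permvar (inv \<sigma>) v"
  using permvar_inv1 permvar_inv2 by metis

lemma lookup_permmono: "bij \<sigma> \<Longrightarrow> Poly_Mapping.lookup (permmono \<sigma> t) v = Poly_Mapping.lookup t (permvar (inv \<sigma>) v)"
  unfolding permmono_def lookup_sum lookup_single
  by (simp add: permvar_eq_iff when_def in_keys_iff)

lemma permmono_add: "bij \<sigma> \<Longrightarrow> permmono \<sigma> (s + t) = permmono \<sigma> s + permmono \<sigma> t"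
  by (rule poly_mapping_eqI) (simp add: lookup_permmono lookup_add)

lemma permmono_diff: "bij \<sigma> \<Longrightarrow> permmono \<sigma> (s - t) = permmono \<sigma> s - permmono \<sigma> t"
  by (rule poly_mapping_eqI) (simp add: lookup_permmono lookup_minus)

lemma permmono_zero[simp]: "bij \<sigma> \<Longrightarrow> permmono \<sigma> 0 = 0"
  by (rule poly_mapping_eqI) (simp add: lookup_permmono)

lemma permmono_single: "bij \<sigma> \<Longrightarrow> permmono \<sigma> (Poly_Mapping.single v k) = Poly_Mapping.single (permvar \<sigma> v) k"
  by (rule poly_mapping_eqI) (auto simp: lookup_permmono lookup_single when_def permvar_eq_iff)

lemma permmono_inv1: "bij \<sigma> \<Longrightarrow> permmono \<sigma> (permmono (inv \<sigma>) t) = t"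
  by (rule poly_mapping_eqI) (simp add: lookup_permmono bij_imp_bij_inv inv_inv_eq permvar_inv1)

lemma permmono_inv2: "bij \<sigma> \<Longrightarrow> permmono (inv \<sigma>) (permmono \<sigma> t) = t"
  by (rule poly_mapping_eqI) (simp add: lookup_permmono bij_imp_bij_inv inv_inv_eq permvar_inv2)

lemma permmono_eq_iff: "bij \<sigma> \<Longrightarrow> permmono \<sigma> w = v \<longleftrightarrow> w = permmono (inv \<sigma>) v"
  using permmono_inv1 permmono_inv2 by metis

lemma permmono_comp: "bij \<sigma> \<Longrightarrow> bij \<tau> \<Longrightarrow> permmono \<sigma> (permmono \<tau> t) = permmono (\<sigma> \<circ> \<tau>) t"
  by (rule poly_mapping_eqI) (simp add: lookup_permmono bij_comp o_inv_distrib permvar_comp bij_is_inj bij_is_surj)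

lemma keys_permmono: "bij \<sigma> \<Longrightarrow> Poly_Mapping.keys (permmono \<sigma> t) = permvar \<sigma> ` Poly_Mapping.keys t"
proof -
  assume b: "bij \<sigma>"
  have "v \<in> permvar \<sigma> ` K \<longleftrightarrow> permvar (inv \<sigma>) v \<in> K" for v K
    unfolding image_iff by (metis permvar_inv1[OF b] permvar_inv2[OF b])
  then show ?thesis using b by (auto simp: in_keys_iff lookup_permmono permvar_inv2)
qed

lemma lookup_permpoly: "bij \<sigma> \<Longrightarrow> Poly_Mapping.lookup (permpoly \<sigma> p) s = Poly_Mapping.lookup p (permmono (inv \<sigma>) s)"
  unfolding permpoly_def lookup_sum lookup_single
  by (simp add: permmono_eq_iff when_def in_keys_iff)

lemma permpoly_add: "bij \<sigma> \<Longrightarrow> permpoly \<sigma> (p + q) = permpoly \<sigma> p + permpoly \<sigma> q"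
  by (rule poly_mapping_eqI) (simp add: lookup_permpoly lookup_add)

lemma permpoly_diff: "bij \<sigma> \<Longrightarrow> permpoly \<sigma> (p - q) = permpoly \<sigma> p - permpoly \<sigma> q"
  by (rule poly_mapping_eqI) (simp add: lookup_permpoly lookup_minus)

lemma permpoly_zero[simp]: "bij \<sigma> \<Longrightarrow> permpoly \<sigma> 0 = 0"
  by (rule poly_mapping_eqI) (simp add: lookup_permpoly)

lemma permpoly_single: "bij \<sigma> \<Longrightarrow> permpoly \<sigma> (Poly_Mapping.single t c) = Poly_Mapping.single (permmono \<sigma> t) c"
  by (rule poly_mapping_eqI) (auto simp: lookup_permpoly lookup_single when_def permmono_eq_iff)

lemma permpoly_const: "bij \<sigma> \<Longrightarrow> permpoly \<sigma> (const c * p) = const c * permpoly \<sigma> p"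
  by (rule poly_mapping_eqI) (simp add: lookup_permpoly lookup_const_mult)

lemma permpoly_sum: "bij \<sigma> \<Longrightarrow> permpoly \<sigma> (\<Sum>i\<in>I. f i) = (\<Sum>i\<in>I. permpoly \<sigma> (f i))"
  by (induction I rule: infinite_finite_induct) (auto simp: permpoly_add)

lemma permpoly_mult: "bij \<sigma> \<Longrightarrow> permpoly \<sigma> (p * q) = permpoly \<sigma> p * permpoly \<sigma> q"
proof (induction p rule: mono_induct)
  case (single s c)
  show ?case
  proof (induction q rule: mono_induct)
    case (single t d) then show ?case using \<open>bij \<sigma>\<close> by (simp add: mult_single permpoly_single permmono_add)
  next
    case (add p q) then show ?case using \<open>bij \<sigma>\<close> by (simp add: distrib_left permpoly_add)
  qed (use \<open>bij \<sigma>\<close> in simp)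
next
  case (add p1 p2) then show ?case by (simp add: distrib_right permpoly_add)
qed simp

lemma permpoly_one[simp]: "bij \<sigma> \<Longrightarrow> permpoly \<sigma> 1 = 1"
  by (metis permpoly_single permmono_zero single_one)

lemma permpoly_prod: "bij \<sigma> \<Longrightarrow> permpoly \<sigma> (\<Prod>i\<in>I. f i) = (\<Prod>i\<in>I. permpoly \<sigma> (f i))"
  by (induction I rule: infinite_finite_induct) (auto simp: permpoly_mult)

lemma permpoly_Var: "bij \<sigma> \<Longrightarrow> permpoly \<sigma> (Var v) = Var (permvar \<sigma> v)"
  by (simp add: Var_def permpoly_single permmono_single)

lemma permpoly_comp: "bij \<sigma> \<Longrightarrow> bij \<tau> \<Longrightarrow> permpoly \<sigma> (permpoly \<tau> p) = permpoly (\<sigma> \<circ> \<tau>) p"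
  by (rule poly_mapping_eqI) (simp add: lookup_permpoly bij_comp o_inv_distrib bij_imp_bij_inv permmono_comp bij_is_inj bij_is_surj)

lemma le_m_perm: "bij \<sigma> \<Longrightarrow> le_m (permmono \<sigma> m) (permmono \<sigma> t) \<longleftrightarrow> le_m m t"
  unfolding le_m_def lookup_permmono
  by (metis permvar_inv2)

lemma coef_perm: "bij \<sigma> \<Longrightarrow> coef (permmono \<sigma> m) (permmono \<sigma> t) = coef m t"
proof -
  assume b: "bij \<sigma>"
  have inj: "inj_on (permvar \<sigma>) X" for X by (metis b inj_on_inverseI permvar_inv2)
  show ?thesis unfolding coef_def keys_permmono[OF b]
    by (subst prod.reindex[OF inj]) (simp add: lookup_permmono b permvar_inv2)
qed

lemma permpoly_dmono: "bij \<sigma> \<Longrightarrow> permpoly \<sigma> (dmono m p) = dmono (permmono \<sigma> m) (permpoly \<sigma> p)"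
proof (induction p rule: mono_induct)
  case (single t c)
  then show ?case by (simp add: dmono_single permpoly_single le_m_perm coef_perm permmono_diff)
next
  case (add p q) then show ?case by (simp add: dmono_add permpoly_add)
qed simp



lemma coef_K:
  assumes "finite K" "Poly_Mapping.keys m \<subseteq> K"
  shows "coef m t = (\<Prod>v\<in>K. of_nat (fact (Poly_Mapping.lookup t v) div fact (Poly_Mapping.lookup t v - Poly_Mapping.lookup m v)))"
  unfolding coef_def
  by (rule prod.mono_neutral_left[OF assms]) (auto simp: in_keys_iff)

lemma fact_div_mult:
  assumes "b + c \<le> (a::nat)"
  shows "(fact a div fact (a - b)) * (fact (a - b) div fact (a - b - c)) = (fact a div fact (a - (c + b)) :: nat)"
proof -
  have d1: "fact (a - b - c) dvd (fact (a - b) :: nat)" by (rule fact_dvd) simp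
  have d2: "fact (a - b) dvd (fact a :: nat)" by (rule fact_dvd) simp
  have e: "a - (c + b) = a - b - c" by simp
  obtain x where x: "fact (a - b) = fact (a - b - c) * (x::nat)" using d1 unfolding dvd_def by blast
  obtain y where y: "fact a = fact (a - b) * (y::nat)" using d2 unfolding dvd_def by blast
  have p1: "fact (a - b - c) > (0::nat)" "fact (a - b) > (0::nat)" by auto
  show ?thesis unfolding e using p1 by (simp add: x y mult.assoc)
qed

lemma le_m_add_iff: "le_m m' t \<Longrightarrow> le_m m (t - m') \<longleftrightarrow> le_m (m + m') t"
  unfolding le_m_def lookup_add lookup_minus
proof -
  assume h: "\<forall>v. Poly_Mapping.lookup m' v \<le> Poly_Mapping.lookup t v"
  have "\<forall>v. (Poly_Mapping.lookup m v \<le> Poly_Mapping.lookup t v - Poly_Mapping.lookup m' v) = (Poly_Mapping.lookup m v + Poly_Mapping.lookup m' v \<le> Poly_Mapping.lookup t v)"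
    using h by (simp add: le_diff_conv2)
  then show "(\<forall>v. Poly_Mapping.lookup m v \<le> Poly_Mapping.lookup t v - Poly_Mapping.lookup m' v) = (\<forall>v. Poly_Mapping.lookup m v + Poly_Mapping.lookup m' v \<le> Poly_Mapping.lookup t v)"
    by simp
qed

lemma le_m_add_D: "le_m (m + m') t \<Longrightarrow> le_m m' t"
  unfolding le_m_def lookup_add by (meson add_leE)

lemma coef_add: 
  assumes "le_m (m + m') t"
  shows "coef m' t * coef m (t - m') = coef (m + m') t"
proof -
  let ?K = "Poly_Mapping.keys m \<union> Poly_Mapping.keys m'"
  have k: "Poly_Mapping.keys (m + m') \<subseteq> ?K" by (rule keys_add)
  have "coef m' t * coef m (t - m') = (\<Prod>v\<in>?K. of_nat (fact (Poly_Mapping.lookup t v) div fact (Poly_Mapping.lookup t v - Poly_Mapping.lookup m' v)) * of_nat (fact (Poly_Mapping.lookup t v - Poly_Mapping.lookup m' v) div fact (Poly_Mapping.lookup t v - Poly_Mapping.lookup m' v - Poly_Mapping.lookup m v)))"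
    by (simp add: coef_K[of ?K m'] coef_K[of ?K m] prod.distrib lookup_minus)
  also have "\<dots> = coef (m + m') t"
    unfolding coef_K[OF _ k, simplified]
  proof (rule prod.cong[OF refl])
    fix v
    have "Poly_Mapping.lookup m' v + Poly_Mapping.lookup m v \<le> Poly_Mapping.lookup t v"
      using assms unfolding le_m_def lookup_add by (metis add.commute)
    from fact_div_mult[OF this] show "of_nat (fact (Poly_Mapping.lookup t v) div fact (Poly_Mapping.lookup t v - Poly_Mapping.lookup m' v)) * of_nat (fact (Poly_Mapping.lookup t v - Poly_Mapping.lookup m' v) div fact (Poly_Mapping.lookup t v - Poly_Mapping.lookup m' v - Poly_Mapping.lookup m v)) =
         (of_nat (fact (Poly_Mapping.lookup t v) div fact (Poly_Mapping.lookup t v - Poly_Mapping.lookup (m + m') v)) :: complex)"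
      by (simp add: lookup_add flip: of_nat_mult)
  qed
  finally show ?thesis .
qed

lemma dmono_comp: "dmono m (dmono m' p) = dmono (m + m') p"
proof (induction p rule: mono_induct)
  case (single t c)
  show ?case
  proof (cases "le_m m' t")
    case True
    have e: "t - m' - m = t - (m + m')" by (simp add: diff_diff_add add.commute)
    from True show ?thesis
      by (auto simp: dmono_single le_m_add_iff e coef_add[symmetric] mult.assoc)
  next
    case False
    then show ?thesis by (auto simp: dmono_single dest: le_m_add_D)
  qed
next
  case (add p q) then show ?case by (simp add: dmono_add)
qed simp

lemma dmono_Var:
  assumes "w \<notin> Poly_Mapping.keys m"
  shows "dmono m (Var w * q) = Var w * dmono m q"
proof (induction q rule: mono_induct)
  case (single t c)
  let ?u = "Poly_Mapping.single w (1::nat)"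
  have mw: "Poly_Mapping.lookup m w = 0" using assms by (simp add: in_keys_iff)
  have pv: "(Poly_Mapping.lookup m v \<le> Poly_Mapping.lookup (?u + t) v) = (Poly_Mapping.lookup m v \<le> Poly_Mapping.lookup t v)" for v
    by (cases "v = w") (simp_all add: mw lookup_add lookup_single)
  have l: "le_m m (?u + t) \<longleftrightarrow> le_m m t"
    unfolding le_m_def pv ..
  have pc: "v \<in> Poly_Mapping.keys m \<Longrightarrow> Poly_Mapping.lookup (?u + t) v = Poly_Mapping.lookup t v" for v
    using assms by (cases "v = w") (simp_all add: lookup_add lookup_single)
  have c: "coef m (?u + t) = coef m t"
    unfolding coef_def by (rule prod.cong[OF refl]) (simp only: pc)
  have d: "(?u + t) - m = ?u + (t - m)" if h: "le_m m t"
  proof (rule poly_mapping_eqI)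
    fix v
    show "Poly_Mapping.lookup (?u + t - m) v = Poly_Mapping.lookup (?u + (t - m)) v"
      using h unfolding le_m_def
      by (cases "v = w") (simp_all add: mw lookup_add lookup_minus lookup_single)
  qed
  have e: "Var w * Poly_Mapping.single t c = Poly_Mapping.single (?u + t) c"
    unfolding Var_def mult_single by simp
  show ?case
  proof (cases "le_m m t")
    case True
    show ?thesis unfolding e dmono_single l c if_P[OF True] d[OF True] Var_def mult_single by simp
  next
    case False
    show ?thesis unfolding e dmono_single l c if_not_P[OF False] by simp
  qed
next
  case (add p q) then show ?case by (simp add: dmono_add distrib_left)
qed simp

definition Gop :: "(nat \<Rightarrow> var) \<Rightarrow> (nat \<Rightarrow> var) \<Rightarrow> nat \<Rightarrow> nat \<Rightarrow> cpoly \<Rightarrow> cpoly" where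
  "Gop a b n k f = (\<Sum>i<n. Var (b i) * dmono (Poly_Mapping.single (a i) k) f)"

lemma Fstar_Gop: "Fstar n k = Gop Inl Inr n k"
  by (auto simp: fun_eq_iff Fstar_def Gop_def Y_def)

lemma Estar_Gop: "Estar n k = Gop Inr Inl n k"
  by (auto simp: fun_eq_iff Estar_def Gop_def X_def)

lemma Gop_add: "Gop a b n k (p + q) = Gop a b n k p + Gop a b n k q"
  by (simp add: Gop_def dmono_add distrib_left sum.distrib)

lemma Gop_const: "Gop a b n k (const c * p) = const c * Gop a b n k p"
  by (simp add: Gop_def dmono_const sum_distrib_left mult.left_commute)

lemma Gop_zero[simp]: "Gop a b n k 0 = 0"
  by (simp add: Gop_def)

lemma Gop_sum: "Gop a b n k (\<Sum>i\<in>I. f i) = (\<Sum>i\<in>I. Gop a b n k (f i))"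
  by (induction I rule: infinite_finite_induct) (auto simp: Gop_add)

lemma pd_Gop:
  assumes "\<And>i j. a j \<noteq> b i"
  shows "pd (a j) (Gop a b n k f) = Gop a b n k (pd (a j) f)"
  unfolding pd_def Gop_def dmono_sum
proof (rule sum.cong[OF refl])
  fix i
  have "b i \<notin> Poly_Mapping.keys (Poly_Mapping.single (a j) (1::nat))" using assms[of j i] by simp
  then show "dmono (Poly_Mapping.single (a j) 1) (Var (b i) * dmono (Poly_Mapping.single (a i) k) f) =
         Var (b i) * dmono (Poly_Mapping.single (a i) k) (dmono (Poly_Mapping.single (a j) 1) f)"
    by (simp add: dmono_Var dmono_comp add.commute)
qed

lemma permpoly_Gop:
  assumes s: "\<sigma> permutes {..<n}" and ha: "\<And>i. permvar \<sigma> (a i) = a (\<sigma> i)" and hb: "\<And>i. permvar \<sigma> (b i) = b (\<sigma> i)"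
  shows "permpoly \<sigma> (Gop a b n k f) = Gop a b n k (permpoly \<sigma> f)"
proof -
  have b: "bij \<sigma>" using s by (rule permutes_bij)
  have "permpoly \<sigma> (Gop a b n k f) = (\<Sum>i<n. Var (b (\<sigma> i)) * dmono (Poly_Mapping.single (a (\<sigma> i)) k) (permpoly \<sigma> f))"
    unfolding Gop_def using b by (simp add: permpoly_sum permpoly_mult permpoly_Var permpoly_dmono permmono_single ha hb)
  also have "\<dots> = Gop a b n k (permpoly \<sigma> f)"
    unfolding Gop_def
    by (rule sum.reindex_bij_betw[of \<sigma> "{..<n}" "{..<n}" "\<lambda>j. Var (b j) * dmono (Poly_Mapping.single (a j) k) (permpoly \<sigma> f)"])
       (rule permutes_imp_bij[OF s])
  finally show ?thesis .
qed



definition Dv :: "nat \<Rightarrow> (nat \<Rightarrow> 'a::comm_ring_1) \<Rightarrow> 'a" where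
  "Dv n x = (\<Prod>(i, j)\<in>{(i, j). i < j \<and> j < n}. x i - x j)"

lemma finite_pairs: "finite {(i, j). i < j \<and> j < (n::nat)}"
  by (rule finite_subset[of _ "{..<n} \<times> {..<n}"]) auto

lemma adj_ok:
  fixes i j a n :: nat
  assumes "i < j" "j < n" "(i, j) \<noteq> (a, Suc a)" "Suc a < n"
  shows "Transposition.transpose a (Suc a) i < Transposition.transpose a (Suc a) j
    \<and> Transposition.transpose a (Suc a) j < n
    \<and> (Transposition.transpose a (Suc a) i, Transposition.transpose a (Suc a) j) \<noteq> (a, Suc a)"
  using assms unfolding Transposition.transpose_def by (simp split: if_split) linarith?

lemma Dv_adj:
  assumes "Suc a < n"
  shows "Dv n (x \<circ> Transposition.transpose a (Suc a)) = - Dv n x"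
proof -
  let ?s = "Transposition.transpose a (Suc a)"
  let ?P = "{(i, j). i < j \<and> j < n}"
  let ?Q = "?P - {(a, Suc a)}"
  let ?h = "\<lambda>(i, j). (?s i, ?s j)"
  let ?g = "\<lambda>(i, j). x i - x j"
  have fin: "finite ?Q" using finite_pairs[of n] by auto
  have mem: "(a, Suc a) \<in> ?P" using assms by auto
  have hQ: "?h p \<in> ?Q" if "p \<in> ?Q" for p
  proof (cases p)
    case (Pair i j)
    with that have "i < j" "j < n" "(i, j) \<noteq> (a, Suc a)" by auto
    from adj_ok[OF this assms] show ?thesis using Pair by simp
  qed
  have hh: "?h (?h p) = p" for p by (cases p) (auto simp: Transposition.transpose_def)
  have bij: "bij_betw ?h ?Q ?Q"
    by (rule bij_betwI[where g = ?h]) (use hQ hh in auto)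
  have "Dv n (x \<circ> ?s) = (\<Prod>p\<in>?P. ?g (?h p))"
    unfolding Dv_def by (rule prod.cong) auto
  also have "\<dots> = ?g (?h (a, Suc a)) * (\<Prod>p\<in>?Q. ?g (?h p))"
    by (rule prod.remove[OF finite_pairs mem])
  also have "(\<Prod>p\<in>?Q. ?g (?h p)) = (\<Prod>p\<in>?Q. ?g p)"
    by (rule prod.reindex_bij_betw[OF bij])
  also have "?g (?h (a, Suc a)) = - ?g (a, Suc a)" by simp
  also have "- ?g (a, Suc a) * (\<Prod>p\<in>?Q. ?g p) = - (?g (a, Suc a) * (\<Prod>p\<in>?Q. ?g p))"
    by (rule mult_minus_left)
  also have "?g (a, Suc a) * (\<Prod>p\<in>?Q. ?g p) = (\<Prod>p\<in>?P. ?g p)"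
    by (rule prod.remove[OF finite_pairs mem, symmetric])
  finally show ?thesis unfolding Dv_def .
qed

lemma Dv_transp_aux:
  "a + Suc d = b \<Longrightarrow> b < n \<Longrightarrow> Dv n (x \<circ> Transposition.transpose a b) = - Dv n x"
proof (induction d arbitrary: a x)
  case 0
  then have b: "b = Suc a" by simp
  have "Suc a < n" using 0 by simp
  then show ?case unfolding b by (rule Dv_adj)
next
  case (Suc d)
  let ?s = "Transposition.transpose a (Suc a)"
  have e: "Transposition.transpose a b = ?s \<circ> Transposition.transpose (Suc a) b \<circ> ?s"
    using Suc.prems by (auto simp: fun_eq_iff Transposition.transpose_def)
  let ?T = "Transposition.transpose (Suc a) b"
  have e2: "x \<circ> Transposition.transpose a b = ((x \<circ> ?s) \<circ> ?T) \<circ> ?s"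
    unfolding e by (simp add: o_assoc)
  have s1: "Dv n (((x \<circ> ?s) \<circ> ?T) \<circ> ?s) = - Dv n ((x \<circ> ?s) \<circ> ?T)"
    by (rule Dv_adj) (use Suc.prems in simp)
  have s2: "Dv n ((x \<circ> ?s) \<circ> ?T) = - Dv n (x \<circ> ?s)"
    by (rule Suc.IH) (use Suc.prems in simp)+
  have s3: "Dv n (x \<circ> ?s) = - Dv n x"
    by (rule Dv_adj) (use Suc.prems in simp)
  show ?case unfolding e2 s1 s2 s3 by simp
qed

lemma Dv_transp:
  assumes "a < n" "b < n" "a \<noteq> b"
  shows "Dv n (x \<circ> Transposition.transpose a b) = - Dv n x"
proof (cases "a < b")
  case True
  then obtain d where "a + Suc d = b" using less_iff_Suc_add by (metis add_Suc_right)
  then show ?thesis using Dv_transp_aux assms by blast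
next
  case False
  then have "b < a" using assms by simp
  then obtain d where "b + Suc d = a" using less_iff_Suc_add by (metis add_Suc_right)
  then show ?thesis using Dv_transp_aux[of b d a n x] assms by (simp add: transpose_commute)
qed

lemma Dv_perm:
  assumes "\<sigma> permutes {..<n}"
  shows "Dv n (x \<circ> \<sigma>) = of_int (sign \<sigma>) * Dv n x"
  using assms finite_lessThan[of n]
proof (induction \<sigma> arbitrary: x rule: permutes_induct)
  case id then show ?case by simp
next
  case (swap a b p)
  have pp: "permutation p" using swap.hyps(4) permutation_permutes by blast
  have "Dv n ((x \<circ> Transposition.transpose a b) \<circ> p) = of_int (sign p) * Dv n (x \<circ> Transposition.transpose a b)"
    by (rule swap.IH)
  then have "Dv n (x \<circ> (Transposition.transpose a b \<circ> p)) = of_int (sign p) * Dv n (x \<circ> Transposition.transpose a b)"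
    by (simp only: o_assoc)
  also have "\<dots> = - of_int (sign p) * Dv n x" using Dv_transp[of a n b x] swap.hyps by simp
  also have "sign (Transposition.transpose a b \<circ> p) = - sign p"
    using sign_compose[OF permutation_swap_id pp] swap.hyps by (simp add: sign_swap_id)
  ultimately show ?case by (simp only:) simp
qed



definition side :: "(nat \<Rightarrow> var) \<Rightarrow> (nat \<Rightarrow> var) \<Rightarrow> bool" where
  "side a b \<longleftrightarrow> (a = Inl \<and> b = Inr) \<or> (a = Inr \<and> b = Inl)"

lemma side_perm1: "side a b \<Longrightarrow> permvar \<sigma> (a i) = a (\<sigma> i)"
  by (auto simp: side_def permvar_def)

lemma side_perm2: "side a b \<Longrightarrow> permvar \<sigma> (b i) = b (\<sigma> i)"
  by (auto simp: side_def permvar_def)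

lemma side_ne: "side a b \<Longrightarrow> a j \<noteq> b i"
  by (auto simp: side_def)

lemma side_vars: "side a b \<Longrightarrow> a ` {..<n} \<subseteq> vars_n n"
  by (auto simp: side_def vars_n_def)

lemma const_mult_const: "const c * const d = const (c * d)"
  unfolding const_def by (simp add: mult_single)

lemma const_one: "const 1 = 1"
  unfolding const_def by simp

lemma const_of_int: "const (of_int k) = of_int k"
  unfolding const_def by simp

lemma const_of_nat: "const (of_nat k) = of_nat k"
  unfolding const_def by simp

lemma permpoly_Dv: "bij \<sigma> \<Longrightarrow> permpoly \<sigma> (Dv n x) = Dv n (\<lambda>i. permpoly \<sigma> (x i))"
  unfolding Dv_def
  by (simp add: permpoly_prod) (rule prod.cong[OF refl], auto simp: permpoly_diff)

lemma antisym_Dl: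
  assumes s: "side a b" and p: "\<sigma> permutes {..<n}"
  shows "permpoly \<sigma> (Dv n (\<lambda>i. Var (a i))) = const (of_int (sign \<sigma>)) * Dv n (\<lambda>i. Var (a i))"
proof -
  have b: "bij \<sigma>" using p by (rule permutes_bij)
  have "(\<lambda>i. permpoly \<sigma> (Var (a i))) = (\<lambda>i. Var (a i)) \<circ> \<sigma>"
    using b s by (simp add: fun_eq_iff permpoly_Var side_perm1)
  then show ?thesis using Dv_perm[OF p] b by (simp add: permpoly_Dv const_of_int)
qed

definition alt :: "nat \<Rightarrow> cpoly \<Rightarrow> cpoly" where
  "alt n p = (\<Sum>\<sigma>\<in>{\<sigma>. \<sigma> permutes {..<n}}. const (of_int (sign \<sigma>)) * permpoly \<sigma> p)"

lemma alt_add: "alt n (p + q) = alt n p + alt n q"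
  unfolding alt_def by (simp add: permpoly_add permutes_bij distrib_left sum.distrib)

lemma alt_const: "alt n (const c * p) = const c * alt n p"
  unfolding alt_def by (simp add: permpoly_const permutes_bij sum_distrib_left mult.left_commute)

lemma alt_Gop:
  assumes "side a b"
  shows "alt n (Gop a b n k p) = Gop a b n k (alt n p)"
  unfolding alt_def Gop_sum Gop_const
  by (rule sum.cong[OF refl]) (simp add: permpoly_Gop side_perm1[OF assms] side_perm2[OF assms])

lemma alt_antisym:
  assumes "antisymmetric n f"
  shows "alt n f = const (of_nat (fact n)) * f"
proof -
  have "alt n f = (\<Sum>\<sigma>\<in>{\<sigma>. \<sigma> permutes {..<n}}. f)"
    unfolding alt_def
  proof (rule sum.cong[OF refl])
    fix \<sigma> assume "\<sigma> \<in> {\<sigma>. \<sigma> permutes {..<n}}"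
    then have "permpoly \<sigma> f = const (of_int (sign \<sigma>)) * f" using assms by (simp add: antisymmetric_def)
    then show "const (of_int (sign \<sigma>)) * permpoly \<sigma> f = f"
      by (simp add: mult.assoc[symmetric] const_mult_const const_one flip: of_int_mult)
  qed
  also have "\<dots> = of_nat (card {\<sigma>. \<sigma> permutes {..<n}}) * f" by simp
  also have "card {\<sigma>. \<sigma> permutes {..<n}} = fact n" by (rule card_permutations) auto
  finally have "alt n f = of_nat (fact n) * f" .
  then show ?thesis by (simp only: const_of_nat)
qed

lemma diffop_K:
  assumes "finite K" "Poly_Mapping.keys g \<subseteq> K"
  shows "diffop g f = (\<Sum>m\<in>K. const (Poly_Mapping.lookup g m) * dmono m f)"
  unfolding diffop_def
  by (rule sum.mono_neutral_left[OF assms]) (auto simp: in_keys_iff const_def)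

lemma diffop_add: "diffop (g1 + g2) f = diffop g1 f + diffop g2 f"
proof -
  let ?K = "Poly_Mapping.keys g1 \<union> Poly_Mapping.keys g2"
  have k: "Poly_Mapping.keys (g1 + g2) \<subseteq> ?K" by (rule keys_add)
  show ?thesis
    unfolding diffop_K[OF _ k, simplified] diffop_K[of ?K g1, simplified] diffop_K[of ?K g2, simplified] sum.distrib[symmetric]
    by (rule sum.cong) (auto simp: lookup_add const_def single_add distrib_right)
qed

lemma diffop_single: "diffop (Poly_Mapping.single m c) f = const c * dmono m f"
  by (subst diffop_K[of "{m}"]) auto

lemma diffop_zero: "diffop 0 f = 0"
  by (simp add: diffop_def)

lemma diffop_sum: "diffop (\<Sum>i\<in>I. g i) f = (\<Sum>i\<in>I. diffop (g i) f)"
  by (induction I rule: infinite_finite_induct) (auto simp: diffop_add diffop_zero)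

lemma keys_sum_sub: "Poly_Mapping.keys (\<Sum>i\<in>I. g i) \<subseteq> (\<Union>i\<in>I. Poly_Mapping.keys (g i))"
proof (induction I rule: infinite_finite_induct)
  case (insert x F)
  then show ?case using keys_add[of "g x" "sum g F"] by auto
qed auto

lemma mdeg_perm: "bij \<sigma> \<Longrightarrow> mdeg (permmono \<sigma> m) = mdeg m"
proof -
  assume b: "bij \<sigma>"
  have inj: "inj_on (permvar \<sigma>) X" for X by (metis b inj_on_inverseI permvar_inv2)
  show ?thesis unfolding mdeg_def keys_permmono[OF b]
    by (subst sum.reindex[OF inj]) (simp add: lookup_permmono b permvar_inv2)
qed

lemma mdeg_pos: "m \<noteq> 0 \<Longrightarrow> mdeg m > 0"
proof -
  assume "m \<noteq> 0"
  then obtain v where v: "v \<in> Poly_Mapping.keys m" by (metis all_not_in_conv keys_eq_empty)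
  have "0 < Poly_Mapping.lookup m v" using v by (simp add: in_keys_iff)
  also have "\<dots> \<le> mdeg m" unfolding mdeg_def by (rule member_le_sum[OF v]) auto
  finally show ?thesis .
qed

lemma dmono_zero_mono: "dmono 0 p = p"
proof (induction p rule: mono_induct)
  case (single t c) then show ?case by (simp add: dmono_single le_m_def coef_def)
next
  case (add p q) then show ?case by (simp add: dmono_add)
qed simp

lemma alt_dmono_zero:
  assumes s: "side a b" and m: "m \<noteq> 0" "Poly_Mapping.keys m \<subseteq> a ` {..<n}"
    and DH: "Dv n (\<lambda>i. Var (a i)) \<in> DH n"
  shows "alt n (dmono m (Dv n (\<lambda>i. Var (a i)))) = 0"
proof -
  let ?D = "Dv n (\<lambda>i. Var (a i))"
  let ?P = "{\<sigma>. \<sigma> permutes {..<n}}"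
  define g where "g = (\<Sum>\<sigma>\<in>?P. Poly_Mapping.single (permmono \<sigma> m) (1::complex))"
  have "alt n (dmono m ?D) = (\<Sum>\<sigma>\<in>?P. dmono (permmono \<sigma> m) ?D)"
    unfolding alt_def
  proof (rule sum.cong[OF refl])
    fix \<sigma> assume "\<sigma> \<in> ?P"
    then have p: "\<sigma> permutes {..<n}" by simp
    then have b: "bij \<sigma>" by (rule permutes_bij)
    show "const (of_int (sign \<sigma>)) * permpoly \<sigma> (dmono m ?D) = dmono (permmono \<sigma> m) ?D"
      using b by (simp add: permpoly_dmono antisym_Dl[OF s p] dmono_const mult.assoc[symmetric]
          const_mult_const const_one flip: of_int_mult)
  qed
  also have "\<dots> = diffop g ?D"
    unfolding g_def diffop_sum diffop_single const_one by simp
  also have "\<dots> = 0"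
  proof -
    have kg: "Poly_Mapping.keys g \<subseteq> (\<lambda>\<sigma>. permmono \<sigma> m) ` ?P"
      unfolding g_def using keys_sum_sub[of "\<lambda>\<sigma>. Poly_Mapping.single (permmono \<sigma> m) (1::complex)" ?P] by auto
    have km: "Poly_Mapping.keys (permmono \<sigma> m) \<subseteq> a ` {..<n}" if "\<sigma> \<in> ?P" for \<sigma>
    proof -
      have p: "\<sigma> permutes {..<n}" using that by simp
      have "Poly_Mapping.keys (permmono \<sigma> m) = permvar \<sigma> ` Poly_Mapping.keys m"
        by (rule keys_permmono[OF permutes_bij[OF p]])
      also have "\<dots> \<subseteq> permvar \<sigma> ` a ` {..<n}" using m by auto
      also have "\<dots> \<subseteq> a ` {..<n}"
        using side_perm1[OF s] permutes_in_image[OF p] by auto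
      finally show ?thesis .
    qed
    have gp: "g \<in> polys n"
      unfolding polys_def vars_def using kg km side_vars[OF s, of n] by fastforce
    have gs: "symmetric n g"
      unfolding symmetric_def
    proof (intro allI impI)
      fix \<tau> assume t: "\<tau> permutes {..<n}"
      have bt: "bij \<tau>" using t by (rule permutes_bij)
      have "permpoly \<tau> g = (\<Sum>\<sigma>\<in>?P. Poly_Mapping.single (permmono (\<tau> \<circ> \<sigma>) m) 1)"
        unfolding g_def using bt by (simp add: permpoly_sum permpoly_single permmono_comp permutes_bij)
      also have "\<dots> = g"
        unfolding g_def by (rule setum_permutations_compose_left[OF t, symmetric])
      finally show "permpoly \<tau> g = g" .
    qed
    have gh: "homogeneous (mdeg m) g"
      unfolding homogeneous_def using kg by (auto simp: mdeg_perm permutes_bij)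
    have gsym: "g \<in> sym_gens n"
      unfolding sym_gens_def using gp gs gh mdeg_pos[OF m(1)] by blast
    have one: "(1::cpoly) \<in> polys n"
      by (simp add: polys_def vars_def)
    have "g \<in> sym_ideal n"
      unfolding sym_ideal_def
      by (rule CollectI, rule exI[of _ "[(1, g)]"]) (use one gsym in simp)
    then show ?thesis using DH by (simp add: DH_def)
  qed
  finally show ?thesis .
qed

inductive_set NF :: "(nat \<Rightarrow> var) \<Rightarrow> (nat \<Rightarrow> var) \<Rightarrow> nat \<Rightarrow> cpoly set" for a b n where
  nf_base: "Poly_Mapping.keys m \<subseteq> a ` {..<n} \<Longrightarrow> dmono m (Dv n (\<lambda>i. Var (a i))) \<in> NF a b n"
| nf_add: "p \<in> NF a b n \<Longrightarrow> q \<in> NF a b n \<Longrightarrow> p + q \<in> NF a b n"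
| nf_smult: "p \<in> NF a b n \<Longrightarrow> const c * p \<in> NF a b n"
| nf_op: "1 \<le> k \<Longrightarrow> k \<le> n - 1 \<Longrightarrow> p \<in> NF a b n \<Longrightarrow> Gop a b n k p \<in> NF a b n"

lemma NF_pd:
  assumes s: "side a b" and i: "i < n"
  shows "p \<in> NF a b n \<Longrightarrow> pd (a i) p \<in> NF a b n"
proof (induction p rule: NF.induct)
  case (nf_base m)
  have eq: "pd (a i) (dmono m (Dv n (\<lambda>i. Var (a i)))) = dmono (Poly_Mapping.single (a i) 1 + m) (Dv n (\<lambda>i. Var (a i)))"
    unfolding pd_def dmono_comp ..
  have k: "Poly_Mapping.keys (Poly_Mapping.single (a i) 1 + m) \<subseteq> a ` {..<n}"
    using keys_add[of "Poly_Mapping.single (a i) (1::nat)" m] nf_base i by auto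
  show ?case unfolding eq by (rule NF.nf_base[OF k])
next
  case (nf_add p q) then show ?case by (simp add: pd_def dmono_add NF.nf_add)
next
  case (nf_smult p c) then show ?case by (simp add: pd_def dmono_const NF.nf_smult)
next
  case (nf_op k p)
  have eq: "pd (a i) (Gop a b n k p) = Gop a b n k (pd (a i) p)" by (rule pd_Gop[OF side_ne[OF s]])
  show ?case unfolding eq by (rule NF.nf_op[OF nf_op.hyps(1,2) nf_op.IH])
qed

lemma gen_NF:
  assumes s: "side a b"
  shows "p \<in> generated ({Gop a b n k | k. 1 \<le> k \<and> k \<le> n - 1} \<union> {pd (a i) | i. i < n}) (Dv n (\<lambda>i. Var (a i))) \<Longrightarrow> p \<in> NF a b n"
proof (induction p rule: generated.induct)
  case base
  have "dmono 0 (Dv n (\<lambda>i. Var (a i))) \<in> NF a b n" by (rule nf_base) simp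
  then show ?case by (simp add: dmono_zero_mono)
next
  case (add p q) then show ?case by (blast intro: nf_add)
next
  case (smult p c) then show ?case by (blast intro: nf_smult)
next
  case (op T p)
  from op.hyps(1) show ?case
  proof
    assume "T \<in> {Gop a b n k | k. 1 \<le> k \<and> k \<le> n - 1}"
    then obtain k where "T = Gop a b n k" "1 \<le> k" "k \<le> n - 1" by blast
    then show ?case using op.IH by (simp add: nf_op)
  next
    assume "T \<in> {pd (a i) | i. i < n}"
    then obtain i where "T = pd (a i)" "i < n" by blast
    then show ?case using NF_pd[OF s] op.IH by simp
  qed
qed

lemma NF_alt:
  assumes s: "side a b" and DH: "Dv n (\<lambda>i. Var (a i)) \<in> DH n"
  shows "p \<in> NF a b n \<Longrightarrow> alt n p \<in> generated {Gop a b n k | k. 1 \<le> k \<and> k \<le> n - 1} (Dv n (\<lambda>i. Var (a i)))"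
proof (induction p rule: NF.induct)
  case (nf_base m)
  show ?case
  proof (cases "m = 0")
    case True
    have "antisymmetric n (Dv n (\<lambda>i. Var (a i)))"
      unfolding antisymmetric_def using antisym_Dl[OF s] by blast
    then show ?thesis using True by (simp add: dmono_zero_mono alt_antisym generated.smult generated.base)
  next
    case False
    have "const 0 * Dv n (\<lambda>i. Var (a i)) \<in> generated {Gop a b n k | k. 1 \<le> k \<and> k \<le> n - 1} (Dv n (\<lambda>i. Var (a i)))"
      by (rule generated.smult[OF generated.base])
    then show ?thesis using alt_dmono_zero[OF s False nf_base DH] by (simp add: const_def)
  qed
next
  case (nf_add p q) then show ?case by (simp add: alt_add generated.add)
next
  case (nf_smult p c) then show ?case by (simp add: alt_const generated.smult)
next
  case (nf_op k p)
  have "Gop a b n k \<in> {Gop a b n k | k. 1 \<le> k \<and> k \<le> n - 1}" using nf_op.hyps(1,2) by blast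
  from generated.op[OF this nf_op.IH] show ?case by (simp add: alt_Gop[OF s])
qed

lemma generated_mono:
  assumes "ops1 \<subseteq> ops2"
  shows "p \<in> generated ops1 p0 \<Longrightarrow> p \<in> generated ops2 p0"
  by (induction p rule: generated.induct) (use assms in \<open>auto intro: generated.intros\<close>)

lemma gen_antisym:
  assumes s: "side a b"
  shows "p \<in> generated {Gop a b n k | k. 1 \<le> k \<and> k \<le> n - 1} (Dv n (\<lambda>i. Var (a i))) \<Longrightarrow> antisymmetric n p"
proof (induction p rule: generated.induct)
  case base then show ?case unfolding antisymmetric_def using antisym_Dl[OF s] by blast
next
  case (add p q) then show ?case by (simp add: antisymmetric_def permpoly_add permutes_bij distrib_left)
next
  case (smult p c) then show ?case by (simp add: antisymmetric_def permpoly_const permutes_bij mult.left_commute)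
next
  case (op T p)
  then obtain k where T: "T = Gop a b n k" by blast
  show ?case using op.IH unfolding antisymmetric_def T
    by (simp add: permpoly_Gop side_perm1[OF s] side_perm2[OF s] Gop_const)
qed

lemma main_generic:
  assumes s: "side a b"
    and H: "DH n = generated ({Gop a b n k | k. 1 \<le> k \<and> k \<le> n - 1} \<union> {pd (a i) | i. i < n}) (Dv n (\<lambda>i. Var (a i)))"
  shows "DH_sgn n = generated {Gop a b n k | k. 1 \<le> k \<and> k \<le> n - 1} (Dv n (\<lambda>i. Var (a i)))"
    (is "_ = generated ?G ?D")
proof
  have DHD: "?D \<in> DH n" unfolding H by (rule generated.base)
  show "DH_sgn n \<subseteq> generated ?G ?D"
  proof
    fix f assume f: "f \<in> DH_sgn n"
    then have "f \<in> NF a b n" using gen_NF[OF s] H by (auto simp: DH_sgn_def)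
    then have "alt n f \<in> generated ?G ?D" by (rule NF_alt[OF s DHD])
    then have "const (1 / of_nat (fact n)) * alt n f \<in> generated ?G ?D" by (rule generated.smult)
    moreover have "const (1 / of_nat (fact n)) * alt n f = f"
      using f by (simp add: DH_sgn_def alt_antisym mult.assoc[symmetric] const_mult_const const_one)
    ultimately show "f \<in> generated ?G ?D" by simp
  qed
  show "generated ?G ?D \<subseteq> DH_sgn n"
  proof
    fix p assume p: "p \<in> generated ?G ?D"
    have "p \<in> DH n" unfolding H by (rule generated_mono[OF _ p]) auto
    then show "p \<in> DH_sgn n" using gen_antisym[OF s p] by (simp add: DH_sgn_def)
  qed
qed


theorem corollary2p19:
  fixes n :: nat
  assumes haiman_x: "DH n = generated ({Fstar n k | k. 1 \<le> k \<and> k \<le> n - 1} \<union> {pd (Inl i) | i. i < n}) (Delta_x n)"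
    and haiman_y: "DH n = generated ({Estar n k | k. 1 \<le> k \<and> k \<le> n - 1} \<union> {pd (Inr i) | i. i < n}) (Delta_y n)"
  shows "DH_sgn n = generated {Fstar n k | k. 1 \<le> k \<and> k \<le> n - 1} (Delta_x n)
       \<and> DH_sgn n = generated {Estar n k | k. 1 \<le> k \<and> k \<le> n - 1} (Delta_y n)"
proof -
  have sx: "side Inl Inr" and sy: "side Inr Inl" by (simp_all add: side_def)
  have dx: "Delta_x n = Dv n (\<lambda>i. Var (Inl i))" by (simp add: Delta_x_def Dv_def X_def)
  have dy: "Delta_y n = Dv n (\<lambda>i. Var (Inr i))" by (simp add: Delta_y_def Dv_def Y_def)
  have hx: "DH n = generated ({Gop Inl Inr n k | k. 1 \<le> k \<and> k \<le> n - 1} \<union> {pd (Inl i) | i. i < n}) (Dv n (\<lambda>i. Var (Inl i)))"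
    using haiman_x unfolding dx Fstar_Gop .
  have hy: "DH n = generated ({Gop Inr Inl n k | k. 1 \<le> k \<and> k \<le> n - 1} \<union> {pd (Inr i) | i. i < n}) (Dv n (\<lambda>i. Var (Inr i)))"
    using haiman_y unfolding dy Estar_Gop .
  show ?thesis
    unfolding dx dy Fstar_Gop Estar_Gop
    using main_generic[OF sx hx] main_generic[OF sy hy] by simp
qed

end
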